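(* Let $n\ge 2$. For each $(a,b)\in\Omega_n$, the set $L^{(n)}_{(a,b)}:=L(\{1,\omega^a,j,\omega^bj\})$ is a reflection system for $\mathcal{D}_n$, and $$L^{(n)}_{(a,b)}=\{\omega^{ma}\}_{1\le m\le 2n/a}\cup\{\omega^{\ell b}j\}_{1\le \ell\le 2n/b}.$$ Every reflection system for $\mathcal{D}_n$ is equivalent to $L^{(n)}_{(a,b)}$ for some $(a,b)\in\Omega_n$. Moreover $|L^{(n)}_{(a,b)}|=\frac{2n}{a}+\frac{2n}{b}$, and these cardinalities are pairwise different for different $(a,b)\in\Omega_n$.
   Context: $\mathbb{H}$ is the real quaternion algebra with basis $1,i,j,k$. For $n\ge2$ let $\omega:=\cos(\pi/n)+i\sin(\pi/n)\in\mathbb{H}$ (a primitive $2n$-th root of unity) and $\mathcal{D}_n:=\langle\omega,j\rangle$, the dicyclic group of order $4n$. Let $\Omega_n:=\{(a,b): 1\le a\le b\le n,\ a\mid n,\ b\mid n,\ \gcd(a,b)=1\}$. For a group $K$ and $x,y\in K$ put $x\circ y:=xy^{-1}x$; for $X\subseteq K$, $L(X)$ is the smallest subset of $K$ containing $X$ and closed under $\circ$. A reflection system for a finite group $K$ is a subset $L\subseteq K$ generating $K$, closed under $\circ$, and containing $1$. Two reflection systems $L,L'$ for $K$ are equivalent if $L'=\phi(xL)$ or $L'=\phi(Lx)$ for some $x\in L$ and some automorphism $\phi$ of $K$. *)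

theory Defs
  imports Complex_Main
begin

datatype quat = Quat (Re: real) (Im1: real) (Im2: real) (Im3: real)

instantiation quat :: "{one, times, inverse}"
begin
definition one_quat_def: "1 = Quat 1 0 0 0"
definition times_quat_def:
  "x * y = Quat (Re x * Re y - Im1 x * Im1 y - Im2 x * Im2 y - Im3 x * Im3 y)
                (Re x * Im1 y + Im1 x * Re y + Im2 x * Im3 y - Im3 x * Im2 y)
                (Re x * Im2 y - Im1 x * Im3 y + Im2 x * Re y + Im3 x * Im1 y)
                (Re x * Im3 y + Im1 x * Im2 y - Im2 x * Im1 y + Im3 x * Re y)"
definition inverse_quat_def:
  "inverse x = (let r = (Re x)\<^sup>2 + (Im1 x)\<^sup>2 + (Im2 x)\<^sup>2 + (Im3 x)\<^sup>2
                in Quat (Re x / r) (- Im1 x / r) (- Im2 x / r) (- Im3 x / r))"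
definition divide_quat_def: "x div y = x * inverse (y :: quat)"
instance ..
end

instance quat :: monoid_mult
proof
  fix a b c :: quat
  show "a * b * c = a * (b * c)"
    by (cases a; cases b; cases c) (simp add: times_quat_def algebra_simps)
  show "1 * a = a" by (cases a) (simp add: times_quat_def one_quat_def)
  show "a * 1 = a" by (cases a) (simp add: times_quat_def one_quat_def)
qed

definition qi :: quat where "qi = Quat 0 1 0 0"
definition qj :: quat where "qj = Quat 0 0 1 0"

definition omega :: "nat \<Rightarrow> quat" where
  "omega n = Quat (cos (pi / real n)) (sin (pi / real n)) 0 0"

inductive_set qgen :: "quat set \<Rightarrow> quat set" for X where
  one: "1 \<in> qgen X"
| base: "x \<in> X \<Longrightarrow> x \<in> qgen X"
| mult: "x \<in> qgen X \<Longrightarrow> y \<in> qgen X \<Longrightarrow> x * y \<in> qgen X"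
| inv: "x \<in> qgen X \<Longrightarrow> inverse x \<in> qgen X"

definition Dic :: "nat \<Rightarrow> quat set" where
  "Dic n = qgen {omega n, qj}"

definition qcirc :: "quat \<Rightarrow> quat \<Rightarrow> quat" where
  "qcirc x y = x * inverse y * x"

inductive_set Lcl :: "quat set \<Rightarrow> quat set" for X where
  base: "x \<in> X \<Longrightarrow> x \<in> Lcl X"
| circ: "x \<in> Lcl X \<Longrightarrow> y \<in> Lcl X \<Longrightarrow> qcirc x y \<in> Lcl X"

definition reflection_system :: "quat set \<Rightarrow> quat set \<Rightarrow> bool" where
  "reflection_system K L \<longleftrightarrow>
     L \<subseteq> K \<and> qgen L = K \<and> (\<forall>x\<in>L. \<forall>y\<in>L. qcirc x y \<in> L) \<and> 1 \<in> L"

definition group_aut :: "quat set \<Rightarrow> (quat \<Rightarrow> quat) \<Rightarrow> bool" where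
  "group_aut K \<phi> \<longleftrightarrow> bij_betw \<phi> K K \<and> (\<forall>x\<in>K. \<forall>y\<in>K. \<phi> (x * y) = \<phi> x * \<phi> y)"

definition rs_equivalent :: "quat set \<Rightarrow> quat set \<Rightarrow> quat set \<Rightarrow> bool" where
  "rs_equivalent K L L' \<longleftrightarrow>
     (\<exists>x\<in>L. \<exists>\<phi>. group_aut K \<phi> \<and>
        (L' = \<phi> ` ((\<lambda>y. x * y) ` L) \<or> L' = \<phi> ` ((\<lambda>y. y * x) ` L)))"

definition Omega :: "nat \<Rightarrow> (nat \<times> nat) set" where
  "Omega n = {(a, b). 1 \<le> a \<and> a \<le> b \<and> b \<le> n \<and> a dvd n \<and> b dvd n \<and> coprime a b}"

definition Lab :: "nat \<Rightarrow> nat \<Rightarrow> nat \<Rightarrow> quat set" where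
  "Lab n a b = Lcl {1, omega n ^ a, qj, omega n ^ b * qj}"

end

theory Submission
  imports Defs
begin

definition th :: "nat \<Rightarrow> int \<Rightarrow> real" where "th n k = of_int k * pi / real n"
definition rot :: "nat \<Rightarrow> int \<Rightarrow> quat" where
  "rot n k = Quat (cos (th n k)) (sin (th n k)) 0 0"
definition refl :: "nat \<Rightarrow> int \<Rightarrow> quat" where
  "refl n k = Quat 0 0 (cos (th n k)) (sin (th n k))"

lemma th_add: "th n (p + q) = th n p + th n q"
  by (simp add: th_def add_divide_distrib distrib_right)
lemma th_diff: "th n (p - q) = th n p - th n q"
  by (simp add: th_def diff_divide_distrib left_diff_distrib)
lemma th_n: "n > 0 \<Longrightarrow> th n (int n) = pi"
  by (simp add: th_def)
lemma th_2n: "n > 0 \<Longrightarrow> th n (2 * int n) = 2 * pi"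
  by (simp add: th_def)

lemma rot_rot: "rot n p * rot n q = rot n (p + q)"
  by (simp add: rot_def times_quat_def th_add cos_add sin_add)
lemma rot_refl: "rot n p * refl n q = refl n (p + q)"
  by (simp add: rot_def refl_def times_quat_def th_add cos_add sin_add)
lemma refl_rot: "refl n p * rot n q = refl n (p - q)"
  by (simp add: rot_def refl_def times_quat_def th_diff cos_diff sin_diff)
lemma refl_refl: "n > 0 \<Longrightarrow> refl n p * refl n q = rot n (p - q + int n)"
  by (simp add: rot_def refl_def times_quat_def th_diff th_add th_n cos_diff sin_diff)
lemma inv_rot: "inverse (rot n p) = rot n (- p)"
  by (simp add: rot_def inverse_quat_def th_def)
lemma inv_refl: "n > 0 \<Longrightarrow> inverse (refl n p) = refl n (p + int n)"
  by (simp add: refl_def inverse_quat_def th_add th_n)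
lemma rot_0: "rot n 0 = 1"
  by (simp add: rot_def one_quat_def th_def)
lemma rot_1: "rot n 1 = omega n"
  by (simp add: rot_def omega_def th_def)
lemma refl_0: "refl n 0 = qj"
  by (simp add: refl_def qj_def th_def)
lemma rot_neq_refl: "rot n p \<noteq> refl n q"
proof
  assume "rot n p = refl n q"
  hence "cos (th n p) = 0" "sin (th n p) = 0" by (simp_all add: rot_def refl_def)
  thus False using sin_cos_squared_add[of "th n p"] by simp
qed
lemma omega_pow: "omega n ^ m = rot n (int m)"
  by (induction m) (simp_all add: rot_0 flip: rot_1 add: rot_rot mult.commute)

lemma rot_eq_iff: assumes "n > 0" shows "rot n p = rot n q \<longleftrightarrow> (2 * int n) dvd (p - q)"
proof
  assume "rot n p = rot n q"
  hence c: "cos (th n p) = cos (th n q)" "sin (th n p) = sin (th n q)" by (simp_all add: rot_def)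
  have "cos (th n (p - q)) = 1" unfolding th_diff cos_diff c
    using sin_cos_squared_add[of "th n q"] by (simp add: power2_eq_square)
  then obtain m :: int where "th n (p - q) = real_of_int m * 2 * pi" using cos_one_2pi_int by blast
  hence "of_int (p - q) * pi / real n = of_int m * 2 * pi" by (simp add: th_def)
  hence "pi * real_of_int (p - q) = pi * real_of_int (m * 2 * int n)" using assms by (simp add: field_simps)
  hence "real_of_int (p - q) = real_of_int (m * 2 * int n)" by simp
  hence "p - q = m * 2 * int n" by linarith
  thus "(2 * int n) dvd (p - q)" by simp
next
  assume "(2 * int n) dvd (p - q)"
  then obtain m where m: "p = q + 2 * int n * m" by (metis dvd_def add_diff_cancel_left' diff_add_cancel add.commute)
  have "th n p = th n q + of_int m * (2 * pi)" using assms by (simp add: m th_add th_def field_simps)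
  thus "rot n p = rot n q" by (simp add: rot_def cos_add sin_add mult.commute[of _ "2*pi"])
qed

lemma refl_eq_iff: assumes "n > 0" shows "refl n p = refl n q \<longleftrightarrow> (2 * int n) dvd (p - q)"
  using rot_eq_iff[OF assms, of p q] by (simp add: rot_def refl_def)

definition Dset :: "nat \<Rightarrow> quat set" where "Dset n = range (rot n) \<union> range (refl n)"

lemma D_mult: "n > 0 \<Longrightarrow> x \<in> Dset n \<Longrightarrow> y \<in> Dset n \<Longrightarrow> x * y \<in> Dset n"
  by (auto simp: Dset_def rot_rot rot_refl refl_rot refl_refl)
lemma D_inv: "n > 0 \<Longrightarrow> x \<in> Dset n \<Longrightarrow> inverse x \<in> Dset n"
  by (auto simp: Dset_def inv_rot inv_refl)
lemma D_one: "1 \<in> Dset n"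
  unfolding Dset_def using rangeI[of "rot n" 0] by (simp add: rot_0)

lemma qgen_sub: assumes "n > 0" "X \<subseteq> Dset n" shows "qgen X \<subseteq> Dset n"
proof
  fix x assume "x \<in> qgen X" thus "x \<in> Dset n"
    by (induction rule: qgen.induct) (use assms D_one D_mult D_inv in auto)
qed

lemma qgen_rot_nat: assumes "rot n a \<in> qgen X" shows "rot n (int m * a) \<in> qgen X"
proof (induction m)
  case 0 then show ?case by (simp add: rot_0 qgen.one)
next
  case (Suc m)
  have "rot n (int (Suc m) * a) = rot n (int m * a) * rot n a" by (simp add: rot_rot algebra_simps)
  then show ?case using Suc assms qgen.mult by metis
qed

lemma qgen_rot_int: assumes "rot n a \<in> qgen X" shows "rot n (m * a) \<in> qgen X"
proof (cases "m \<ge> 0")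
  case True
  then obtain k where "m = int k" by (metis nonneg_int_cases)
  then show ?thesis using qgen_rot_nat[OF assms] by simp
next
  case False
  then obtain k where k: "m = - int k" by (metis linorder_not_le neg_int_cases less_imp_le nonpos_int_cases)
  have "rot n (m * a) = inverse (rot n (int k * a))" by (simp add: inv_rot k)
  then show ?thesis using qgen_rot_nat[OF assms] qgen.inv by metis
qed

lemma qgen_all: assumes "rot n 1 \<in> qgen X" "refl n 0 \<in> qgen X" shows "Dset n \<subseteq> qgen X"
proof
  fix x assume "x \<in> Dset n"
  then obtain k where "x = rot n k \<or> x = refl n k" by (auto simp: Dset_def)
  moreover have r: "rot n k \<in> qgen X" using qgen_rot_int[OF assms(1), of k] by simp
  moreover have "refl n k = rot n k * refl n 0" by (simp add: rot_refl)
  ultimately show "x \<in> qgen X" using assms(2) qgen.mult by metis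
qed

lemma Dic_eq: assumes "n > 0" shows "Dic n = Dset n"
proof
  show "Dic n \<subseteq> Dset n" unfolding Dic_def
    by (rule qgen_sub[OF assms]) (use rangeI[of "rot n" 1] rangeI[of "refl n" 0] in \<open>auto simp: Dset_def rot_1 refl_0\<close>)
  show "Dset n \<subseteq> Dic n" unfolding Dic_def
    by (rule qgen_all) (auto simp: rot_1 refl_0 intro: qgen.base)
qed

lemma qcirc_rr: "qcirc (rot n p) (rot n q) = rot n (2 * p - q)"
  by (simp add: qcirc_def inv_rot rot_rot)
lemma qcirc_ff: "n > 0 \<Longrightarrow> qcirc (refl n p) (refl n q) = refl n (2 * p - q)"
  by (simp add: qcirc_def inv_refl refl_refl rot_refl)
lemma qcirc_rf: "n > 0 \<Longrightarrow> qcirc (rot n p) (refl n q) = refl n (q + int n)"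
  by (simp add: qcirc_def inv_refl refl_rot rot_refl)
lemma qcirc_fr: "n > 0 \<Longrightarrow> qcirc (refl n p) (rot n q) = rot n (q + int n)"
  by (simp add: qcirc_def inv_rot refl_refl refl_rot)

lemma Lcl_sub: assumes "X \<subseteq> Y" "\<And>x y. x \<in> Y \<Longrightarrow> y \<in> Y \<Longrightarrow> qcirc x y \<in> Y" shows "Lcl X \<subseteq> Y"
proof
  fix x assume "x \<in> Lcl X" thus "x \<in> Y" by (induction rule: Lcl.induct) (use assms in auto)
qed

lemma refl_prog_nat:
  fixes P :: "int \<Rightarrow> bool"
  assumes "P 0" "P d" "\<And>p q. P p \<Longrightarrow> P q \<Longrightarrow> P (2 * p - q)"
  shows "P (int k * d) \<and> P ((int k + 1) * d)"
proof (induction k)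
  case 0 then show ?case using assms by simp
next
  case (Suc k)
  have "P (2 * ((int k + 1) * d) - int k * d)" using Suc assms(3) by blast
  moreover have "2 * ((int k + 1) * d) - int k * d = (int (Suc k) + 1) * d" by (simp add: algebra_simps)
  ultimately show ?case using Suc by (simp add: add.commute)
qed

lemma refl_prog:
  fixes P :: "int \<Rightarrow> bool"
  assumes "P 0" "P d" "\<And>p q. P p \<Longrightarrow> P q \<Longrightarrow> P (2 * p - q)"
  shows "P (k * d)"
proof (cases "k \<ge> 0")
  case True
  then obtain m where "k = int m" by (metis nonneg_int_cases)
  then show ?thesis using refl_prog_nat[OF assms] by simp
next
  case False
  then obtain m where k: "k = - int m" by (metis linorder_not_le neg_int_cases less_imp_le nonpos_int_cases)
  have "P (2 * 0 - int m * d)" using assms(3)[OF assms(1)] refl_prog_nat[OF assms] by blast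
  then show ?thesis by (simp add: k)
qed

definition M :: "nat \<Rightarrow> int \<Rightarrow> int \<Rightarrow> quat set" where
  "M n a b = {q. \<exists>k. q = rot n (k * a)} \<union> {q. \<exists>k. q = refl n (k * b)}"

lemma Lcl_M:
  assumes n: "n > 0" and ab: "a dvd int n" "b dvd int n"
  shows "Lcl {rot n 0, rot n a, refl n 0, refl n b} = M n a b"
proof
  show "Lcl {rot n 0, rot n a, refl n 0, refl n b} \<subseteq> M n a b"
  proof (rule Lcl_sub)
    show "{rot n 0, rot n a, refl n 0, refl n b} \<subseteq> M n a b"
      unfolding M_def by (auto intro: exI[of _ 0] exI[of _ 1])
  next
    fix x y assume "x \<in> M n a b" "y \<in> M n a b"
    then obtain k l where x: "x = rot n (k * a) \<or> x = refl n (k * b)"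
      and y: "y = rot n (l * a) \<or> y = refl n (l * b)" unfolding M_def by blast
    obtain u v where u: "int n = u * a" and v: "int n = v * b" using ab by (metis dvd_def mult.commute)
    show "qcirc x y \<in> M n a b"
      using x y unfolding M_def
      apply (elim disjE)
      apply (simp_all add: qcirc_rr qcirc_ff[OF n] qcirc_rf[OF n] qcirc_fr[OF n])
      apply (rule disjI1, rule exI[of _ "2 * k - l"], simp add: algebra_simps)
      apply (rule disjI2, rule exI[of _ "l + v"], simp add: algebra_simps v)
      apply (rule disjI1, rule exI[of _ "l + u"], simp add: algebra_simps u)
      apply (rule disjI2, rule exI[of _ "2 * k - l"], simp add: algebra_simps)
      done
  qed
next
  let ?L = "Lcl {rot n 0, rot n a, refl n 0, refl n b}"
  have 1: "rot n (k * a) \<in> ?L" for k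
    by (rule refl_prog[where P = "\<lambda>t. rot n t \<in> ?L"])
       (auto intro: Lcl.base simp: qcirc_rr[symmetric] intro!: Lcl.circ)
  have 2: "refl n (k * b) \<in> ?L" for k
    by (rule refl_prog[where P = "\<lambda>t. refl n t \<in> ?L"])
       (auto intro: Lcl.base simp: qcirc_ff[OF n, symmetric] intro!: Lcl.circ)
  show "M n a b \<subseteq> ?L" unfolding M_def using 1 2 by blast
qed

lemma Lab_M:
  assumes n: "n > 0" and ab: "a dvd n" "b dvd n"
  shows "Lab n a b = M n (int a) (int b)"
proof -
  have j: "qj = refl n 0" by (simp add: refl_0)
  have "Lab n a b = Lcl {rot n 0, rot n (int a), refl n 0, refl n (int b)}"
    unfolding Lab_def omega_pow j by (simp add: rot_0 rot_refl)
  also have "\<dots> = M n (int a) (int b)" by (rule Lcl_M) (use n ab in auto)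
  finally show ?thesis .
qed

lemma per_set:
  fixes f :: "int \<Rightarrow> quat" and a N :: nat
  assumes per: "\<And>p q. int N dvd (p - q) \<Longrightarrow> f p = f q"
    and a: "a > 0" "a dvd N" and N: "N > 0"
  shows "{q. \<exists>k. q = f (k * int a)} = {f (int (m * a)) | m. 1 \<le> m \<and> m \<le> N div a}"
proof
  define K where "K = N div a"
  have NK: "N = K * a" using a by (simp add: K_def)
  have K0: "K > 0" using NK N by (metis gr0I mult_is_0)
  show "{f (int (m * a)) | m. 1 \<le> m \<and> m \<le> N div a} \<subseteq> {q. \<exists>k. q = f (k * int a)}"
    by auto
  show "{q. \<exists>k. q = f (k * int a)} \<subseteq> {f (int (m * a)) | m. 1 \<le> m \<and> m \<le> N div a}"
  proof
    fix q assume "q \<in> {q. \<exists>k. q = f (k * int a)}"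
    then obtain k where q: "q = f (k * int a)" by blast
    define m where "m = nat ((k - 1) mod int K) + 1"
    have m1: "int m = (k - 1) mod int K + 1" using K0 by (simp add: m_def)
    have "(k - 1) mod int K < int K" using K0 by simp
    hence "int m \<le> int K" using m1 by linarith
    hence mK: "m \<le> K" by simp
    have "k * int a - int (m * a) = (k - 1 - (k - 1) mod int K) * int a"
      using m1 by (simp add: algebra_simps)
    also have "\<dots> = int K * ((k - 1) div int K) * int a"
      by (simp only: minus_mod_eq_mult_div)
    also have "\<dots> = int N * ((k - 1) div int K)" by (simp add: NK algebra_simps)
    finally have "int N dvd (k * int a - int (m * a))" by simp
    hence "q = f (int (m * a))" using per q by blast
    thus "q \<in> {f (int (m * a)) | m. 1 \<le> m \<and> m \<le> N div a}"
    proof -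
      have "1 \<le> m" by (simp add: m_def)
      thus ?thesis using mK \<open>q = f (int (m * a))\<close> unfolding K_def by blast
    qed
  qed
qed

lemma per_card:
  fixes f :: "int \<Rightarrow> quat" and a N :: nat
  assumes per: "\<And>p q. f p = f q \<longleftrightarrow> int N dvd (p - q)"
    and a: "a > 0" "a dvd N" and N: "N > 0"
  shows "card {q. \<exists>k. q = f (k * int a)} = N div a"
proof -
  define K where "K = N div a"
  have NK: "N = K * a" using a by (simp add: K_def)
  have K0: "K > 0" using NK N by (metis gr0I mult_is_0)
  have eq: "{q. \<exists>k. q = f (k * int a)} = (\<lambda>m. f (int m * int a)) ` {0..<K}"
  proof
    show "(\<lambda>m. f (int m * int a)) ` {0..<K} \<subseteq> {q. \<exists>k. q = f (k * int a)}" by auto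
    show "{q. \<exists>k. q = f (k * int a)} \<subseteq> (\<lambda>m. f (int m * int a)) ` {0..<K}"
    proof
      fix q assume "q \<in> {q. \<exists>k. q = f (k * int a)}"
      then obtain k where q: "q = f (k * int a)" by blast
      define m where "m = nat (k mod int K)"
      have m1: "int m = k mod int K" using K0 by (simp add: m_def)
      have "k mod int K < int K" using K0 by simp
      hence "int m < int K" using m1 by linarith
      hence mK: "m < K" by simp
      have "k * int a - int m * int a = (k - k mod int K) * int a"
        using m1 by (simp add: algebra_simps)
      also have "\<dots> = int K * (k div int K) * int a"
        by (simp only: minus_mod_eq_mult_div)
      also have "\<dots> = int N * (k div int K)" by (simp add: NK algebra_simps)
      finally have "int N dvd (k * int a - int m * int a)" by simp
      hence "q = f (int m * int a)" using per q by blast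
      thus "q \<in> (\<lambda>m. f (int m * int a)) ` {0..<K}" using mK by auto
    qed
  qed
  have inj: "inj_on (\<lambda>m. f (int m * int a)) {0..<K}"
  proof (rule inj_onI)
    fix x y assume x: "x \<in> {0..<K}" and y: "y \<in> {0..<K}" and e: "f (int x * int a) = f (int y * int a)"
    hence "int N dvd (int x * int a - int y * int a)" using per by blast
    hence "int K * int a dvd (int x - int y) * int a" by (simp add: NK algebra_simps)
    hence "int K dvd (int x - int y)" using a by simp
    hence "int x mod int K = int y mod int K" by (simp add: mod_eq_dvd_iff)
    thus "x = y" using x y by simp
  qed
  show ?thesis unfolding eq using card_image[OF inj] by (simp add: K_def)
qed

lemma M_card:
  assumes n: "n > 0" and a: "a > 0" "a dvd 2 * n" and b: "b > 0" "b dvd 2 * n"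
  shows "card (M n (int a) (int b)) = 2 * n div a + 2 * n div b"
proof -
  have c1: "card {q. \<exists>k. q = rot n (k * int a)} = 2 * n div a"
    by (rule per_card) (use n a rot_eq_iff[OF n] in auto)
  have c2: "card {q. \<exists>k. q = refl n (k * int b)} = 2 * n div b"
    by (rule per_card) (use n b refl_eq_iff[OF n] in auto)
  have p1: "2 * n div a > 0" using a n by (simp add: div_greater_zero_iff dvd_imp_le)
  have p2: "2 * n div b > 0" using b n by (simp add: div_greater_zero_iff dvd_imp_le)
  have f1: "finite {q. \<exists>k. q = rot n (k * int a)}" by (rule card_ge_0_finite) (simp add: c1 p1)
  have f2: "finite {q. \<exists>k. q = refl n (k * int b)}" by (rule card_ge_0_finite) (simp add: c2 p2)
  have d: "{q. \<exists>k. q = rot n (k * int a)} \<inter> {q. \<exists>k. q = refl n (k * int b)} = {}"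
    using rot_neq_refl by blast
  show ?thesis unfolding M_def using card_Un_disjoint[OF f1 f2 d] c1 c2 by simp
qed

lemma M_formula:
  assumes n: "n > 0" and a: "a > 0" "a dvd 2 * n" and b: "b > 0" "b dvd 2 * n"
  shows "M n (int a) (int b) = {omega n ^ (m * a) | m. 1 \<le> m \<and> m \<le> 2 * n div a}
                        \<union> {omega n ^ (l * b) * qj | l. 1 \<le> l \<and> l \<le> 2 * n div b}"
proof -
  have e1: "{q. \<exists>k. q = rot n (k * int a)} = {rot n (int (m * a)) | m. 1 \<le> m \<and> m \<le> 2 * n div a}"
    by (rule per_set) (use n a rot_eq_iff[OF n] in auto)
  have e2: "{q. \<exists>k. q = refl n (k * int b)} = {refl n (int (m * b)) | m. 1 \<le> m \<and> m \<le> 2 * n div b}"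
    by (rule per_set) (use n b refl_eq_iff[OF n] in auto)
  have j: "qj = refl n 0" by (simp add: refl_0)
  show ?thesis unfolding M_def e1 e2 omega_pow j by (simp add: rot_refl)
qed

lemma coprime_sum_prod: "coprime (a::nat) b \<Longrightarrow> coprime (a + b) (a * b)"
proof -
  assume c: "coprime a b"
  have "gcd (b + a) a = gcd b a" "gcd (a + b) b = gcd a b" by (rule gcd_add1)+
  hence "gcd (b + a) a = 1" "gcd (a + b) b = 1" using c by (simp_all add: coprime_iff_gcd_eq_1 gcd.commute)
  hence "coprime (a + b) a" "coprime (a + b) b" by (simp_all add: coprime_iff_gcd_eq_1 add.commute)
  thus ?thesis by simp
qed

lemma sums_eq:
  fixes a b a' b' N :: nat
  assumes N: "N > 0" and d: "a dvd N" "b dvd N" "a' dvd N" "b' dvd N"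
    and c: "coprime a b" "coprime a' b'" and le: "a \<le> b" "a' \<le> b'"
    and pos: "a > 0" "b > 0" "a' > 0" "b' > 0"
    and e: "N div a + N div b = N div a' + N div b'"
  shows "a = a' \<and> b = b'"
proof -
  have h: "(N div x + N div y) * (x * y) = N * (x + y)" if "x dvd N" "y dvd N" for x y :: nat
    using that by (simp add: algebra_simps)
  have "N * ((a + b) * (a' * b')) = N * ((a' + b') * (a * b))"
  proof -
    have "N * ((a + b) * (a' * b')) = (N div a + N div b) * (a * b) * (a' * b')"
      using h[OF d(1,2)] by simp
    also have "\<dots> = (N div a' + N div b') * (a' * b') * (a * b)" by (simp add: e algebra_simps)
    also have "\<dots> = N * ((a' + b') * (a * b))" using h[OF d(3,4)] by simp
    finally show ?thesis .
  qed
  hence E: "(a + b) * (a' * b') = (a' + b') * (a * b)" using N by simp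
  have 1: "a * b dvd a' * b'"
  proof -
    have "a * b dvd (a + b) * (a' * b')" using E by (metis dvd_triv_right)
    thus ?thesis using coprime_sum_prod[OF c(1)] by (metis coprime_commute coprime_dvd_mult_right_iff)
  qed
  have 2: "a' * b' dvd a * b"
  proof -
    have "a' * b' dvd (a' + b') * (a * b)" using E by (metis dvd_triv_right)
    thus ?thesis using coprime_sum_prod[OF c(2)] by (metis coprime_commute coprime_dvd_mult_right_iff)
  qed
  have P: "a * b = a' * b'" using 1 2 by (simp add: dvd_antisym)
  have S: "a + b = a' + b'" using E P pos by simp
  show ?thesis
  proof (cases "a \<le> a'")
    case True
    then obtain t where t: "a' = a + t" using le_Suc_ex by blast
    have bt: "b = b' + t" using S t by simp
    have "a * (b' + t) = (a + t) * b'" using P t bt by simp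
    hence "a * t = t * b'" by (simp add: algebra_simps)
    hence "t = 0 \<or> a = b'" by auto
    thus ?thesis using t bt le by auto
  next
    case False
    then obtain t where t: "a = a' + t" using le_Suc_ex[of a' a] by auto
    have bt: "b' = b + t" using S t by simp
    have "a' * (b + t) = (a' + t) * b" using P t bt by simp
    hence "a' * t = t * b" by (simp add: algebra_simps)
    hence "t = 0 \<or> a' = b" by auto
    thus ?thesis using t bt le by auto
  qed
qed

lemma Lab_rs:
  assumes n: "n > 0" and a: "a > 0" "a dvd n" and b: "b > 0" "b dvd n" and c: "coprime a b"
  shows "reflection_system (Dic n) (Lab n a b)"
proof -
  have L: "Lab n a b = M n (int a) (int b)" by (rule Lab_M) (use n a b in auto)
  have sub: "M n (int a) (int b) \<subseteq> Dset n" unfolding M_def Dset_def by auto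
  have ra: "rot n (int a) \<in> qgen (M n (int a) (int b))"
    by (rule qgen.base) (auto simp: M_def intro: exI[of _ 1])
  have f0: "refl n 0 \<in> qgen (M n (int a) (int b))"
    by (rule qgen.base) (auto simp: M_def intro: exI[of _ 0])
  have fb: "refl n (int b) \<in> qgen (M n (int a) (int b))"
    by (rule qgen.base) (auto simp: M_def intro: exI[of _ 1])
  have "rot n (int b) = refl n (int b) * refl n 0 * inverse (refl n 0 * refl n 0)"
    using n by (simp add: refl_refl inv_rot rot_rot)
  hence rb: "rot n (int b) \<in> qgen (M n (int a) (int b))"
    using f0 fb by (metis qgen.mult qgen.inv)
  obtain u v where uv: "u * int a + v * int b = gcd (int a) (int b)" using bezout_int by blast
  have "gcd (int a) (int b) = 1" using c by (simp add: coprime_iff_gcd_eq_1)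
  hence "rot n 1 = rot n (u * int a) * rot n (v * int b)" using uv by (simp add: rot_rot)
  hence r1: "rot n 1 \<in> qgen (M n (int a) (int b))"
    using qgen_rot_int[OF ra] qgen_rot_int[OF rb] qgen.mult by metis
  have "qgen (M n (int a) (int b)) = Dset n"
    using qgen_sub[OF n sub] qgen_all[OF r1 f0] by blast
  hence q: "qgen (Lab n a b) = Dset n" "Lab n a b \<subseteq> Dset n" using L sub by simp_all
  have o: "1 \<in> Lab n a b" unfolding Lab_def by (rule Lcl.base) simp
  have cl: "\<forall>x\<in>Lab n a b. \<forall>y\<in>Lab n a b. qcirc x y \<in> Lab n a b"
    unfolding Lab_def by (blast intro: Lcl.circ)
  show ?thesis unfolding reflection_system_def Dic_eq[OF n] using q o cl by blast
qed

lemma Z_closed: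
  fixes X :: "int set" and N :: int
  assumes X0: "0 \<in> X" and XN: "N \<in> X" and N: "N > 0"
    and cl: "\<And>p q. p \<in> X \<Longrightarrow> q \<in> X \<Longrightarrow> 2 * p - q \<in> X"
  shows "\<exists>d > 0. d dvd N \<and> (\<forall>x. x \<in> X \<longleftrightarrow> d dvd x)"
proof -
  define m where "m = (LEAST m::nat. m > 0 \<and> int m \<in> X)"
  have ex: "nat N > 0 \<and> int (nat N) \<in> X" using N XN by simp
  have m: "m > 0 \<and> int m \<in> X" unfolding m_def by (rule LeastI[of _ "nat N"], rule ex)
  have mmin: "\<And>k::nat. k > 0 \<Longrightarrow> int k \<in> X \<Longrightarrow> m \<le> k" unfolding m_def by (rule Least_le) simp
  define d where "d = int m"
  have d0: "d > 0" and dX: "d \<in> X" using m by (auto simp: d_def)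
  have mult: "k * d \<in> X" for k
    by (rule refl_prog[where P = "\<lambda>t. t \<in> X"]) (use X0 dX cl in auto)
  have min: "\<not> (0 < r \<and> r < d \<and> r \<in> X)" for r
  proof
    assume r: "0 < r \<and> r < d \<and> r \<in> X"
    hence "m \<le> nat r" using mmin[of "nat r"] by simp
    hence "int m \<le> int (nat r)" by (simp only: of_nat_le_iff)
    thus False using r by (simp add: d_def)
  qed
  have sub: "d dvd x" if x: "x \<in> X" for x
  proof -
    define j where "j = x div (2 * d)"
    define r where "r = x mod (2 * d)"
    have xr: "x = r + 2 * d * j" by (simp add: r_def j_def)
    have "2 * (j * d) - x \<in> X" using cl[OF mult x] .
    hence "2 * 0 - (2 * (j * d) - x) \<in> X" using cl[OF X0] by blast
    hence rX: "r \<in> X" by (simp add: xr algebra_simps)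
    have r0: "0 \<le> r" "r < 2 * d" using d0 by (simp_all add: r_def)
    have "r = 0 \<or> r = d"
    proof (rule ccontr)
      assume "\<not> (r = 0 \<or> r = d)"
      hence "(0 < r \<and> r < d) \<or> (d < r \<and> r < 2 * d)" using r0 by auto
      moreover have "2 * d - r \<in> X" using cl[OF dX rX] .
      ultimately show False using min[of r] min[of "2 * d - r"] rX by auto
    qed
    thus ?thesis using xr by auto
  qed
  have "d dvd N" using sub XN .
  moreover have "x \<in> X \<longleftrightarrow> d dvd x" for x
    using sub mult by (metis dvd_def mult.commute)
  ultimately show ?thesis using d0 by blast
qed

lemma qgen_sub_gen:
  assumes "X \<subseteq> Y" "1 \<in> Y" "\<And>x y. x \<in> Y \<Longrightarrow> y \<in> Y \<Longrightarrow> x * y \<in> Y" "\<And>x. x \<in> Y \<Longrightarrow> inverse x \<in> Y"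
  shows "qgen X \<subseteq> Y"
proof
  fix x assume "x \<in> qgen X" thus "x \<in> Y" by (induction rule: qgen.induct) (use assms in auto)
qed

lemma M_range: "M n a b = range (\<lambda>k. rot n (k * a)) \<union> range (\<lambda>k. refl n (k * b))"
  unfolding M_def by auto

definition phi :: "nat \<Rightarrow> int \<Rightarrow> quat \<Rightarrow> quat" where
  "phi n t q = (if q \<in> range (refl n) then q * rot n t else q)"

lemma phi_rot: "phi n t (rot n k) = rot n k"
  unfolding phi_def using rot_neq_refl by auto
lemma phi_refl: "phi n t (refl n k) = refl n (k - t)"
  unfolding phi_def by (auto simp: refl_rot)

lemma phi_aut: assumes n: "n > 0" shows "group_aut (Dic n) (phi n t)"
proof -
  have inj: "inj_on (phi n t) (Dset n)"
  proof (rule inj_onI)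
    fix x y assume "x \<in> Dset n" "y \<in> Dset n" "phi n t x = phi n t y"
    then show "x = y" unfolding Dset_def
    proof (elim UnE rangeE)
      fix p q assume "phi n t x = phi n t y" "x = refl n p" "y = refl n q"
      hence "refl n (p - t) = refl n (q - t)" by (simp add: phi_refl)
      hence "refl n (p - t) * rot n (- t) = refl n (q - t) * rot n (- t)" by simp
      thus "x = y" using \<open>x = refl n p\<close> \<open>y = refl n q\<close> by (simp add: refl_rot)
    qed (auto simp: phi_rot phi_refl rot_neq_refl rot_neq_refl[symmetric])
  qed
  have img: "phi n t ` Dset n = Dset n"
  proof
    show "phi n t ` Dset n \<subseteq> Dset n" unfolding Dset_def by (auto simp: phi_rot phi_refl)
    show "Dset n \<subseteq> phi n t ` Dset n"
    proof
      fix x assume "x \<in> Dset n"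
      then obtain k where "x = rot n k \<or> x = refl n k" unfolding Dset_def by auto
      moreover have "rot n k = phi n t (rot n k)" "refl n k = phi n t (refl n (k + t))"
        by (simp_all add: phi_rot phi_refl)
      moreover have "rot n k \<in> Dset n" "refl n (k + t) \<in> Dset n" unfolding Dset_def by auto
      ultimately show "x \<in> phi n t ` Dset n" by (metis image_eqI)
    qed
  qed
  have hom: "phi n t (x * y) = phi n t x * phi n t y" if hx: "x \<in> Dset n" and hy: "y \<in> Dset n" for x y
  proof -
    obtain p where x: "x = rot n p \<or> x = refl n p" using hx unfolding Dset_def by blast
    obtain q where y: "y = rot n q \<or> y = refl n q" using hy unfolding Dset_def by blast
    show ?thesis using x y n
      by (elim disjE) (simp_all add: phi_rot phi_refl rot_rot rot_refl refl_rot refl_refl algebra_simps)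
  qed
  show ?thesis unfolding group_aut_def Dic_eq[OF n] bij_betw_def using inj img hom by blast
qed

lemma classify:
  assumes n: "n > 0" and rs: "reflection_system (Dic n) L"
  shows "\<exists>(a, b) \<in> Omega n. rs_equivalent (Dic n) L (Lab n a b)"
proof -
  have LD: "L \<subseteq> Dset n" and qL: "qgen L = Dset n"
    and clL: "\<And>x y. x \<in> L \<Longrightarrow> y \<in> L \<Longrightarrow> qcirc x y \<in> L" and oneL: "1 \<in> L"
    using rs unfolding reflection_system_def Dic_eq[OF n] by auto
  define R where "R = {k. rot n k \<in> L}"
  define S where "S = {k. refl n k \<in> L}"
  have R0: "0 \<in> R" using oneL by (simp add: R_def rot_0)
  have Rcl: "2 * p - q \<in> R" if "p \<in> R" "q \<in> R" for p q
    using clL[of "rot n p" "rot n q"] that by (simp add: R_def qcirc_rr)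
  have R2n: "2 * int n \<in> R" using R0 rot_eq_iff[OF n, of "2 * int n" 0] by (simp add: R_def)
  have Sne: "S \<noteq> {}"
  proof
    assume "S = {}"
    hence "L \<subseteq> range (rot n)" using LD unfolding Dset_def S_def by auto
    hence "qgen L \<subseteq> range (rot n)"
      by (rule qgen_sub_gen) (use rangeI[of "rot n" 0] in \<open>auto simp: rot_rot inv_rot rot_0\<close>)
    moreover have "refl n 0 \<in> qgen L" using qL by (simp add: Dset_def)
    ultimately show False using rot_neq_refl by (metis imageE subsetD)
  qed
  then obtain s where sS: "s \<in> S" by blast
  obtain a where a0: "a > 0" and a2n: "a dvd 2 * int n" and aR: "\<And>x. x \<in> R \<longleftrightarrow> a dvd x"
    using Z_closed[of R "2 * int n", OF R0 R2n _ Rcl] n by auto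
  have "int n \<in> R" using clL[of "refl n s" "rot n 0"] sS R0 n by (simp add: R_def S_def qcirc_fr)
  hence an: "a dvd int n" using aR by blast
  define X where "X = {k. s + k \<in> S}"
  have X0: "0 \<in> X" using sS by (simp add: X_def)
  have X2n: "2 * int n \<in> X" using sS refl_eq_iff[OF n, of "s + 2 * int n" s] by (simp add: X_def S_def)
  have Xcl: "2 * p - q \<in> X" if "p \<in> X" "q \<in> X" for p q
  proof -
    have "qcirc (refl n (s + p)) (refl n (s + q)) \<in> L" using clL that by (simp add: X_def S_def)
    hence "refl n (2 * (s + p) - (s + q)) \<in> L" by (simp add: qcirc_ff[OF n])
    moreover have "2 * (s + p) - (s + q) = s + (2 * p - q)" by simp
    ultimately show ?thesis by (simp add: X_def S_def)
  qed
  obtain b where b0: "b > 0" and b2n: "b dvd 2 * int n" and bX: "\<And>x. x \<in> X \<longleftrightarrow> b dvd x"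
    using Z_closed[of X "2 * int n", OF X0 X2n _ Xcl] n by auto
  have nX: "int n \<in> X" using clL[of "rot n 0" "refl n s"] sS R0 n
    by (simp add: R_def S_def X_def qcirc_rf add.commute)
  hence bn: "b dvd int n" using bX by blast
  have Lr: "L = range (\<lambda>k. rot n (k * a)) \<union> range (\<lambda>k. refl n (s + k * b))"
  proof
    show "L \<subseteq> range (\<lambda>k. rot n (k * a)) \<union> range (\<lambda>k. refl n (s + k * b))"
    proof
      fix x assume x: "x \<in> L"
      then obtain k where "x = rot n k \<or> x = refl n k" using LD unfolding Dset_def by blast
      thus "x \<in> range (\<lambda>k. rot n (k * a)) \<union> range (\<lambda>k. refl n (s + k * b))"
      proof
        assume xk: "x = rot n k"
        hence "a dvd k" using x aR by (simp add: R_def)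
        then obtain j where "k = j * a" by (metis dvd_def mult.commute)
        thus ?thesis using xk by auto
      next
        assume xk: "x = refl n k"
        hence "k - s \<in> X" using x by (simp add: X_def S_def)
        hence "b dvd (k - s)" using bX by blast
        then obtain j where "k - s = j * b" by (metis dvd_def mult.commute)
        hence "k = s + j * b" by simp
        thus ?thesis using xk by auto
      qed
    qed
    show "range (\<lambda>k. rot n (k * a)) \<union> range (\<lambda>k. refl n (s + k * b)) \<subseteq> L"
    proof
      fix x assume "x \<in> range (\<lambda>k. rot n (k * a)) \<union> range (\<lambda>k. refl n (s + k * b))"
      then obtain k where "x = rot n (k * a) \<or> x = refl n (s + k * b)" by blast
      moreover have "k * a \<in> R" using aR by simp
      moreover have "k * b \<in> X" using bX by simp
      ultimately show "x \<in> L" by (auto simp: R_def X_def S_def)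
    qed
  qed
  define g where "g = gcd a b"
  have gn: "g dvd int n" using an unfolding g_def by (meson dvd_trans gcd_dvd1)
  define Y where "Y = {q. (\<exists>k. g dvd k \<and> q = rot n k) \<or> (\<exists>k. g dvd (k - s) \<and> q = refl n k)}"
  have LY: "L \<subseteq> Y"
  proof
    fix x assume "x \<in> L"
    then obtain k where "x = rot n (k * a) \<or> x = refl n (s + k * b)" using Lr by blast
    moreover have "g dvd k * a" "g dvd (s + k * b - s)" by (simp_all add: g_def)
    ultimately show "x \<in> Y" unfolding Y_def by blast
  qed
  have Y1: "1 \<in> Y" unfolding Y_def by (rule CollectI, rule disjI1, rule exI[of _ 0]) (simp add: rot_0)
  have Ymult: "x * y \<in> Y" if hx: "x \<in> Y" and hy: "y \<in> Y" for x y
  proof -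
    obtain p where x: "(g dvd p \<and> x = rot n p) \<or> (g dvd (p - s) \<and> x = refl n p)" using hx unfolding Y_def by blast
    obtain q where y: "(g dvd q \<and> y = rot n q) \<or> (g dvd (q - s) \<and> y = refl n q)" using hy unfolding Y_def by blast
    show ?thesis using x y
    proof (elim disjE conjE)
      assume h: "g dvd p" "x = rot n p" "g dvd q" "y = rot n q"
      have "g dvd (p + q)" using h by simp
      moreover have "x * y = rot n (p + q)" using h by (simp add: rot_rot)
      ultimately show ?thesis unfolding Y_def by blast
    next
      assume h: "g dvd p" "x = rot n p" "g dvd (q - s)" "y = refl n q"
      have "g dvd (p + q - s)" using dvd_add[OF h(1) h(3)] by (simp add: algebra_simps)
      moreover have "x * y = refl n (p + q)" using h by (simp add: rot_refl)
      ultimately show ?thesis unfolding Y_def by blast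
    next
      assume h: "g dvd (p - s)" "x = refl n p" "g dvd q" "y = rot n q"
      have "g dvd (p - q - s)" using dvd_diff[OF h(1) h(3)] by (simp add: algebra_simps)
      moreover have "x * y = refl n (p - q)" using h by (simp add: refl_rot)
      ultimately show ?thesis unfolding Y_def by blast
    next
      assume h: "g dvd (p - s)" "x = refl n p" "g dvd (q - s)" "y = refl n q"
      have "g dvd ((p - s) - (q - s) + int n)" using dvd_add[OF dvd_diff[OF h(1) h(3)] gn] .
      hence "g dvd (p - q + int n)" by simp
      moreover have "x * y = rot n (p - q + int n)" using h n by (simp add: refl_refl)
      ultimately show ?thesis unfolding Y_def by blast
    qed
  qed
  have Yinv: "inverse x \<in> Y" if hx: "x \<in> Y" for x
  proof -
    obtain p where x: "(g dvd p \<and> x = rot n p) \<or> (g dvd (p - s) \<and> x = refl n p)" using hx unfolding Y_def by blast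
    thus ?thesis
    proof (elim disjE conjE)
      assume h: "g dvd p" "x = rot n p"
      have "g dvd (- p)" using h by simp
      moreover have "inverse x = rot n (- p)" using h by (simp add: inv_rot)
      ultimately show ?thesis unfolding Y_def by blast
    next
      assume h: "g dvd (p - s)" "x = refl n p"
      have "g dvd (p - s + int n)" using dvd_add[OF h(1) gn] .
      hence "g dvd (p + int n - s)" by (simp add: algebra_simps)
      moreover have "inverse x = refl n (p + int n)" using h n by (simp add: inv_refl)
      ultimately show ?thesis unfolding Y_def by blast
    qed
  qed
  have "Dset n \<subseteq> Y" using qgen_sub_gen[OF LY Y1 Ymult Yinv] qL by simp
  moreover have "rot n 1 \<in> Dset n" by (simp add: Dset_def)
  ultimately have "rot n 1 \<in> Y" by blast
  hence "(\<exists>k. g dvd k \<and> rot n 1 = rot n k) \<or> (\<exists>k. g dvd (k - s) \<and> rot n 1 = refl n k)"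
    unfolding Y_def by simp
  moreover have "\<not> (\<exists>k. g dvd (k - s) \<and> rot n 1 = refl n k)" using rot_neq_refl by simp
  ultimately obtain k where gk: "g dvd k" and r1: "rot n 1 = rot n k" by blast
  have "2 * int n dvd (1 - k)" using r1 rot_eq_iff[OF n] by blast
  moreover have "g dvd 2 * int n" using gn by simp
  ultimately have "g dvd (1 - k)" using dvd_trans by blast
  hence "g dvd 1" using gk by (metis dvd_add diff_add_cancel)
  hence g1: "gcd a b = 1" by (simp add: g_def)
  define a' where "a' = nat a"
  define b' where "b' = nat b"
  have aa: "a = int a'" and bb: "b = int b'" using a0 b0 by (simp_all add: a'_def b'_def)
  have a'n: "a' dvd n" and b'n: "b' dvd n" using an bn aa bb by simp_all
  have cop: "coprime a' b'" using g1 aa bb by (simp add: coprime_iff_gcd_eq_1)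
  have a'le: "a' \<le> n" and b'le: "b' \<le> n" using a'n b'n n by (simp_all add: dvd_imp_le)
  have a'0: "a' > 0" and b'0: "b' > 0" using a0 b0 aa bb by simp_all
  show ?thesis
  proof (cases "a \<le> b")
    case True
    have om: "(a', b') \<in> Omega n" unfolding Omega_def using True aa bb a'n b'n cop b'le a'0 by auto
    have "Lab n a' b' = M n a b" using Lab_M[OF n a'n b'n] aa bb by simp
    also have "\<dots> = phi n s ` ((\<lambda>y. 1 * y) ` L)"
      unfolding M_range Lr image_Un image_image by (simp add: phi_rot phi_refl)
    finally have "rs_equivalent (Dic n) L (Lab n a' b')"
      unfolding rs_equivalent_def using oneL phi_aut[OF n, of s] by blast
    thus ?thesis using om by blast
  next
    case False
    have om: "(b', a') \<in> Omega n" unfolding Omega_def using False aa bb a'n b'n cop a'le b'0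
      by (auto simp: coprime_commute)
    have xL: "refl n (s + int n) \<in> L" using nX by (simp add: X_def S_def)
    have f1: "(\<lambda>k. phi n (s + int n) (rot n (k * a) * refl n (s + int n))) = (\<lambda>k. refl n (k * a))"
      by (rule ext) (simp add: rot_refl phi_refl)
    have f2: "(\<lambda>k. phi n (s + int n) (refl n (s + k * b) * refl n (s + int n))) = (\<lambda>k. rot n (k * b))"
      by (rule ext) (simp add: refl_refl[OF n] phi_rot)
    have "Lab n b' a' = M n b a" using Lab_M[OF n b'n a'n] aa bb by simp
    also have "\<dots> = phi n (s + int n) ` ((\<lambda>y. y * refl n (s + int n)) ` L)"
      unfolding M_range Lr image_Un image_image f1 f2 by blast
    finally have "rs_equivalent (Dic n) L (Lab n b' a')"
      unfolding rs_equivalent_def using xL phi_aut[OF n, of "s + int n"] by blast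
    thus ?thesis using om by blast
  qed
qed

theorem lemma5p2:
  fixes n :: nat
  assumes "n \<ge> 2"
  shows "(\<forall>(a, b) \<in> Omega n.
            reflection_system (Dic n) (Lab n a b) \<and>
            Lab n a b = {omega n ^ (m * a) | m. 1 \<le> m \<and> m \<le> 2 * n div a}
                        \<union> {omega n ^ (l * b) * qj | l. 1 \<le> l \<and> l \<le> 2 * n div b})
       \<and> (\<forall>L. reflection_system (Dic n) L \<longrightarrow>
            (\<exists>(a, b) \<in> Omega n. rs_equivalent (Dic n) L (Lab n a b)))
       \<and> (\<forall>(a, b) \<in> Omega n. card (Lab n a b) = 2 * n div a + 2 * n div b)
       \<and> (\<forall>(a, b) \<in> Omega n. \<forall>(a', b') \<in> Omega n.
            (a, b) \<noteq> (a', b') \<longrightarrow> 2 * n div a + 2 * n div b \<noteq> 2 * n div a' + 2 * n div b')"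
proof -
  have n: "n > 0" using assms by simp
  have om: "a > 0 \<and> b > 0 \<and> a dvd n \<and> b dvd n \<and> coprime a b \<and> a \<le> b
      \<and> a dvd 2 * n \<and> b dvd 2 * n" if "(a, b) \<in> Omega n" for a b
    using that unfolding Omega_def by auto
  have P1: "\<forall>(a, b) \<in> Omega n.
            reflection_system (Dic n) (Lab n a b) \<and>
            Lab n a b = {omega n ^ (m * a) | m. 1 \<le> m \<and> m \<le> 2 * n div a}
                        \<union> {omega n ^ (l * b) * qj | l. 1 \<le> l \<and> l \<le> 2 * n div b}"
  proof (clarify)
    fix a b assume ab: "(a, b) \<in> Omega n"
    note o = om[OF ab]
    show "reflection_system (Dic n) (Lab n a b) \<and>
            Lab n a b = {omega n ^ (m * a) | m. 1 \<le> m \<and> m \<le> 2 * n div a}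
                        \<union> {omega n ^ (l * b) * qj | l. 1 \<le> l \<and> l \<le> 2 * n div b}"
      using Lab_rs[OF n] Lab_M[OF n] M_formula[OF n] o by simp
  qed
  have P2: "\<forall>L. reflection_system (Dic n) L \<longrightarrow>
            (\<exists>(a, b) \<in> Omega n. rs_equivalent (Dic n) L (Lab n a b))"
    using classify[OF n] by blast
  have P3: "\<forall>(a, b) \<in> Omega n. card (Lab n a b) = 2 * n div a + 2 * n div b"
  proof (clarify)
    fix a b assume ab: "(a, b) \<in> Omega n"
    note o = om[OF ab]
    show "card (Lab n a b) = 2 * n div a + 2 * n div b"
      using Lab_M[OF n] M_card[OF n] o by simp
  qed
  have P4': "a = a' \<and> b = b'" if ab: "(a, b) \<in> Omega n" and ab': "(a', b') \<in> Omega n"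
      and e: "2 * n div a + 2 * n div b = 2 * n div a' + 2 * n div b'" for a b a' b'
  proof -
    note o = om[OF ab] and o' = om[OF ab']
    show ?thesis by (rule sums_eq[OF _ _ _ _ _ _ _ _ _ _ _ _ _ e]) (use n o o' in auto)
  qed
  have P4: "\<forall>(a, b) \<in> Omega n. \<forall>(a', b') \<in> Omega n.
            (a, b) \<noteq> (a', b') \<longrightarrow> 2 * n div a + 2 * n div b \<noteq> 2 * n div a' + 2 * n div b'"
    using P4' by fast
  show ?thesis using P1 P2 P3 P4 by blast
qed


end
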